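(* Let $\mathcal{G}\rightrightarrows M$ be a Lie groupoid and $x\in M$. Then $\mathcal{G}^x=t^{-1}(x)$ is paracompact.
   Context: A Lie groupoid $\mathcal{G}\rightrightarrows M$ consists of a smooth manifold $\mathcal{G}$ (possibly non-Hausdorff and non-second-countable), a Hausdorff second countable smooth manifold $M$, smooth target and source maps $t,s:\mathcal{G}\to M$, smooth unit and inversion maps, and smooth associative multiplication on $\{(g_1,g_2):s(g_1)=t(g_2)\}$ satisfying the groupoid axioms, such that $t$ is a submersion and every fiber $t^{-1}(x)$ is Hausdorff. *)

theory Defs
  imports "HOL-Analysis.Analysis"
begin

fun Ck_on :: "nat \<Rightarrow> ('a::euclidean_space \<Rightarrow> 'b::euclidean_space) \<Rightarrow> 'a set \<Rightarrow> bool" where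
  "Ck_on 0 f U = continuous_on U f"
| "Ck_on (Suc k) f U =
     (f differentiable_on U \<and> (\<forall>v. Ck_on k (\<lambda>x. frechet_derivative f (at x) v) U))"

definition smooth_on :: "('a::euclidean_space \<Rightarrow> 'b::euclidean_space) \<Rightarrow> 'a set \<Rightarrow> bool" where
  "smooth_on f U \<longleftrightarrow> (\<forall>k. Ck_on k f U)"

section \<open>Smooth manifolds (possibly non-Hausdorff, non-second-countable)\<close>

definition chart_in :: "'x topology \<Rightarrow> ('x set \<times> ('x \<Rightarrow> 'e::euclidean_space)) \<Rightarrow> bool" where
  "chart_in X c \<longleftrightarrow> (case c of (U, \<phi>) \<Rightarrow>
      openin X U \<and> open (\<phi> ` U) \<and> homeomorphic_map (subtopology X U) (top_of_set (\<phi> ` U)) \<phi>)"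

definition smooth_atlas :: "'x topology \<Rightarrow> ('x set \<times> ('x \<Rightarrow> 'e::euclidean_space)) set \<Rightarrow> bool" where
  "smooth_atlas X A \<longleftrightarrow>
     (\<forall>c\<in>A. chart_in X c) \<and> \<Union>(fst ` A) = topspace X \<and>
     (\<forall>(U, \<phi>)\<in>A. \<forall>(V, \<psi>)\<in>A. smooth_on (\<psi> \<circ> inv_into U \<phi>) (\<phi> ` (U \<inter> V)))"

definition smooth_map_on ::
  "'x topology \<Rightarrow> ('x set \<times> ('x \<Rightarrow> 'e::euclidean_space)) set \<Rightarrow> 'x set \<Rightarrow>
   'y topology \<Rightarrow> ('y set \<times> ('y \<Rightarrow> 'f::euclidean_space)) set \<Rightarrow> ('x \<Rightarrow> 'y) \<Rightarrow> bool" where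
  "smooth_map_on X A W Y B f \<longleftrightarrow>
     continuous_map (subtopology X W) Y f \<and>
     (\<forall>(U, \<phi>)\<in>A. \<forall>(V, \<psi>)\<in>B. smooth_on (\<psi> \<circ> f \<circ> inv_into U \<phi>) (\<phi> ` (U \<inter> W \<inter> f -` V)))"

definition smooth_map ::
  "'x topology \<Rightarrow> ('x set \<times> ('x \<Rightarrow> 'e::euclidean_space)) set \<Rightarrow>
   'y topology \<Rightarrow> ('y set \<times> ('y \<Rightarrow> 'f::euclidean_space)) set \<Rightarrow> ('x \<Rightarrow> 'y) \<Rightarrow> bool" where
  "smooth_map X A Y B f \<longleftrightarrow> smooth_map_on X A (topspace X) Y B f"

definition submersion ::
  "'x topology \<Rightarrow> ('x set \<times> ('x \<Rightarrow> 'e::euclidean_space)) set \<Rightarrow>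
   'y topology \<Rightarrow> ('y set \<times> ('y \<Rightarrow> 'f::euclidean_space)) set \<Rightarrow> ('x \<Rightarrow> 'y) \<Rightarrow> bool" where
  "submersion X A Y B f \<longleftrightarrow> smooth_map X A Y B f \<and>
     (\<forall>(U, \<phi>)\<in>A. \<forall>(V, \<psi>)\<in>B. \<forall>y\<in>\<phi> ` (U \<inter> f -` V).
        range (frechet_derivative (\<psi> \<circ> f \<circ> inv_into U \<phi>) (at y)) = UNIV)"

definition prod_atlas ::
  "('x set \<times> ('x \<Rightarrow> 'e::euclidean_space)) set \<Rightarrow> ('y set \<times> ('y \<Rightarrow> 'f::euclidean_space)) set \<Rightarrow>
   (('x \<times> 'y) set \<times> ('x \<times> 'y \<Rightarrow> 'e \<times> 'f)) set" where
  "prod_atlas A B = {(U \<times> V, \<lambda>(x, y). (\<phi> x, \<psi> y)) | U \<phi> V \<psi>. (U, \<phi>) \<in> A \<and> (V, \<psi>) \<in> B}"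

text \<open>Smoothness of a map defined only on a subset S of a manifold (used for the
  multiplication on the composable pairs, an embedded submanifold of G \<times> G):
  locally it is the restriction of a smooth map on an open set.\<close>
definition smooth_on_subset ::
  "'x topology \<Rightarrow> ('x set \<times> ('x \<Rightarrow> 'e::euclidean_space)) set \<Rightarrow> 'x set \<Rightarrow>
   'y topology \<Rightarrow> ('y set \<times> ('y \<Rightarrow> 'f::euclidean_space)) set \<Rightarrow> ('x \<Rightarrow> 'y) \<Rightarrow> bool" where
  "smooth_on_subset X A S Y B f \<longleftrightarrow>
     (\<forall>p\<in>S. \<exists>W F. openin X W \<and> p \<in> W \<and> smooth_map_on X A W Y B F \<and> (\<forall>q\<in>W \<inter> S. F q = f q))"

text \<open>G = topspace TG with smooth atlas AG, M = topspace TM with atlas AM;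
  target t, source s, unit u, inverse i, multiplication m (m g h defined when s g = t h).\<close>
definition lie_groupoid ::
  "'g topology \<Rightarrow> ('g set \<times> ('g \<Rightarrow> 'e::euclidean_space)) set \<Rightarrow>
   'm topology \<Rightarrow> ('m set \<times> ('m \<Rightarrow> 'f::euclidean_space)) set \<Rightarrow>
   ('g \<Rightarrow> 'm) \<Rightarrow> ('g \<Rightarrow> 'm) \<Rightarrow> ('m \<Rightarrow> 'g) \<Rightarrow> ('g \<Rightarrow> 'g) \<Rightarrow> ('g \<Rightarrow> 'g \<Rightarrow> 'g) \<Rightarrow> bool" where
  "lie_groupoid TG AG TM AM t s u i m \<longleftrightarrow>
     (let G = topspace TG; M = topspace TM;
          G2 = {(g, h). g \<in> G \<and> h \<in> G \<and> s g = t h} in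
     smooth_atlas TG AG \<and> smooth_atlas TM AM \<and>
     Hausdorff_space TM \<and> second_countable TM \<and>
     \<comment> \<open>algebraic groupoid axioms\<close>
     (\<forall>g\<in>G. t g \<in> M \<and> s g \<in> M) \<and>
     (\<forall>x\<in>M. u x \<in> G \<and> t (u x) = x \<and> s (u x) = x) \<and>
     (\<forall>g\<in>G. i g \<in> G \<and> s (i g) = t g \<and> t (i g) = s g) \<and>
     (\<forall>(g, h)\<in>G2. m g h \<in> G \<and> t (m g h) = t g \<and> s (m g h) = s h) \<and>
     (\<forall>g\<in>G. \<forall>h\<in>G. \<forall>k\<in>G. s g = t h \<and> s h = t k \<longrightarrow> m (m g h) k = m g (m h k)) \<and>
     (\<forall>g\<in>G. m (u (t g)) g = g \<and> m g (u (s g)) = g) \<and>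
     (\<forall>g\<in>G. m g (i g) = u (t g) \<and> m (i g) g = u (s g)) \<and>
     \<comment> \<open>smoothness\<close>
     submersion TG AG TM AM t \<and> smooth_map TG AG TM AM s \<and>
     smooth_map TM AM TG AG u \<and> smooth_map TG AG TG AG i \<and>
     smooth_on_subset (prod_topology TG TG) (prod_atlas AG AG) G2 TG AG (case_prod m) \<and>
     \<comment> \<open>target fibres are Hausdorff\<close>
     (\<forall>x\<in>M. Hausdorff_space (subtopology TG {g \<in> G. t g = x})))"

definition paracompact_space :: "'a topology \<Rightarrow> bool" where
  "paracompact_space X \<longleftrightarrow>
     (\<forall>\<U>. (\<forall>U\<in>\<U>. openin X U) \<and> topspace X \<subseteq> \<Union>\<U> \<longrightarrow>
        (\<exists>\<V>. (\<forall>V\<in>\<V>. openin X V) \<and> topspace X \<subseteq> \<Union>\<V> \<and>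
              (\<forall>V\<in>\<V>. \<exists>U\<in>\<U>. V \<subseteq> U) \<and> locally_finite_in X \<V>))"

end

theory Submission
  imports Defs
begin

lemma reg_nbhd:
  assumes "regular_space X" "openin X T" "a \<in> T"
  shows "\<exists>G. openin X G \<and> a \<in> G \<and> X closure_of G \<subseteq> T"
proof -
  have "closedin X (topspace X - T)" using assms(2) by blast
  moreover have "a \<in> topspace X - (topspace X - T)" using assms openin_subset by fastforce
  ultimately obtain G where "openin X G" "a \<in> G" "disjnt (topspace X - T) (X closure_of G)"
    using assms(1) unfolding regular_space by blast
  moreover have "X closure_of G \<subseteq> topspace X" by (rule closure_of_subset_topspace)
  ultimately show ?thesis by (auto simp: disjnt_iff)
qed

lemma piece_refine:
  assumes reg: "regular_space X" and Qo: "openin X Q"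
   and lin: "Lindelof_space (subtopology X Q)"
   and cov: "\<forall>U\<in>\<U>. openin X U" "topspace X \<subseteq> \<Union>\<U>"
  shows "\<exists>\<V>. (\<forall>V\<in>\<V>. openin X V \<and> V \<subseteq> Q \<and> (\<exists>U\<in>\<U>. V \<subseteq> U)) \<and> Q \<subseteq> \<Union>\<V> \<and>
     (\<forall>y\<in>Q. \<exists>W. openin X W \<and> y \<in> W \<and> W \<subseteq> Q \<and> finite {V\<in>\<V>. V \<inter> W \<noteq> {}})"
proof (cases "Q = {}")
  case True then show ?thesis by (rule_tac x="{}" in exI) auto
next
  case False
  have QX: "Q \<subseteq> topspace X" using Qo openin_subset by blast
  have "\<exists>F G. F \<in> \<U> \<and> y \<in> F \<and> openin X G \<and> y \<in> G \<and> X closure_of G \<subseteq> F \<inter> Q" if yQ: "y \<in> Q" for y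
  proof -
    obtain F where F: "F \<in> \<U>" "y \<in> F" using cov yQ QX by blast
    then have "openin X (F \<inter> Q)" using cov Qo by blast
    then obtain G where "openin X G \<and> y \<in> G \<and> X closure_of G \<subseteq> F \<inter> Q"
      using reg_nbhd[OF reg] F yQ by blast
    then show ?thesis using F by blast
  qed
  then obtain F G where FG: "\<And>y. y \<in> Q \<Longrightarrow> F y \<in> \<U> \<and> y \<in> F y \<and> openin X (G y) \<and> y \<in> G y \<and> X closure_of (G y) \<subseteq> F y \<inter> Q"
    by metis
  have "\<exists>V. countable V \<and> V \<subseteq> G ` Q \<and> Q \<subseteq> \<Union>V"
    using lin unfolding Lindelof_space_subtopology_subset[OF QX]
    apply (elim allE[of _ "G ` Q"]) using FG by blast
  then obtain K where K: "K \<subseteq> Q" "countable K" "Q \<subseteq> \<Union>(G ` K)"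
    by (metis countable_subset_image)
  with False have "K \<noteq> {}" by auto
  then obtain a :: "nat \<Rightarrow> _" where ra: "range a = K"
    by (metis range_from_nat_into \<open>countable K\<close>)
  define C where "C n = (F (a n) \<inter> Q) - \<Union>{X closure_of G (a m) |m. m < n}" for n
  have aQ: "a n \<in> Q" for n using ra K by blast
  have oC: "openin X (C n)" for n
  proof -
    have "closedin X (\<Union>{X closure_of G (a m) |m. m < n})"
      by (rule closedin_Union) auto
    moreover have "openin X (F (a n) \<inter> Q)" using FG[OF aQ] cov Qo by blast
    ultimately show ?thesis by (simp add: C_def openin_diff)
  qed
  have enum: "\<exists>n. y \<in> F(a n) \<and> y \<in> G(a n)" if yQ: "y \<in> Q" for y
  proof -
    obtain k where "k \<in> K" "y \<in> G k" using K yQ by blast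
    then obtain n where "a n = k" using ra by blast
    moreover have "G k \<subseteq> X closure_of G k"
      using FG[OF aQ[of n]] \<open>a n = k\<close> by (simp add: closure_of_subset openin_subset)
    ultimately show ?thesis using FG[OF aQ[of n]] \<open>y \<in> G k\<close> by blast
  qed
  show ?thesis
  proof (rule exI[of _ "range C"], intro conjI)
    show "\<forall>V\<in>range C. openin X V \<and> V \<subseteq> Q \<and> (\<exists>U\<in>\<U>. V \<subseteq> U)"
    proof
    fix V assume "V \<in> range C"
    then obtain n where "V = C n" by blast
    moreover have "C n \<subseteq> F (a n)" "C n \<subseteq> Q" by (auto simp: C_def)
    ultimately show "openin X V \<and> V \<subseteq> Q \<and> (\<exists>U\<in>\<U>. V \<subseteq> U)"
      using oC FG[OF aQ[of n]] by blast
    qed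
  next
    show "Q \<subseteq> \<Union>(range C)"
    proof
      fix y assume y: "y \<in> Q"
      define n where "n \<equiv> LEAST n. y \<in> F(a n)"
      have n: "y \<in> F(a n)"
        using enum [OF y] by (force simp: n_def intro: LeastI)
      have notn: "y \<notin> F(a m)" if mn: "m < n" for m
        using mn not_less_Least by (force simp: n_def)
      then have "y \<notin> \<Union>{X closure_of G (a m) |m. m < n}"
        using FG[OF aQ] by blast
      with n y show "y \<in> \<Union>(range C)" unfolding C_def by blast
    qed
  next
    show "\<forall>y\<in>Q. \<exists>W. openin X W \<and> y \<in> W \<and> W \<subseteq> Q \<and> finite {V \<in> range C. V \<inter> W \<noteq> {}}"
    proof
    fix y assume y: "y \<in> Q"
    obtain n where n: "y \<in> F(a n)" "y \<in> G(a n)" using enum[OF y] by blast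
    have "{V \<in> range C. V \<inter> G (a n) \<noteq> {}} \<subseteq> C ` {..n}"
    proof clarsimp
      fix k assume "C k \<inter> G (a n) \<noteq> {}"
      have "k \<le> n"
      proof (rule ccontr)
        assume "\<not> k \<le> n"
        then have "X closure_of G (a n) \<subseteq> \<Union>{X closure_of G (a m) |m. m < k}"
          by (intro Union_upper) (auto simp: not_le)
        moreover have "G (a n) \<subseteq> X closure_of G (a n)"
          using FG[OF aQ[of n]] by (simp add: closure_of_subset openin_subset)
        ultimately have "C k \<inter> G (a n) = {}" unfolding C_def by blast
        with \<open>C k \<inter> G (a n) \<noteq> {}\<close> show False by blast
      qed
      then show "C k \<in> C ` {..n}" by blast
    qed
    then have "finite {V \<in> range C. V \<inter> G (a n) \<noteq> {}}" by (rule finite_subset) auto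
    moreover have "G (a n) \<subseteq> X closure_of G (a n)"
      using FG[OF aQ[of n]] by (simp add: closure_of_subset openin_subset)
    then have "G (a n) \<subseteq> Q" using FG[OF aQ[of n]] by blast
    ultimately show "\<exists>W. openin X W \<and> y \<in> W \<and> W \<subseteq> Q \<and> finite {V \<in> range C. V \<inter> W \<noteq> {}}"
      using FG[OF aQ[of n]] n by blast
    qed
  qed
qed

lemma para_pieces:
  assumes reg: "regular_space X"
    and P: "\<And>y. y \<in> topspace X \<Longrightarrow> y \<in> P y \<and> openin X (P y) \<and> Lindelof_space (subtopology X (P y))"
    and disj: "\<And>y z. y \<in> topspace X \<Longrightarrow> z \<in> topspace X \<Longrightarrow> P y = P z \<or> P y \<inter> P z = {}"
  shows "paracompact_space X"
  unfolding paracompact_space_def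
proof (intro allI impI)
  fix \<U> assume cov: "(\<forall>U\<in>\<U>. openin X U) \<and> topspace X \<subseteq> \<Union>\<U>"
  define PP where "PP = P ` topspace X"
  have "\<exists>\<V>. (\<forall>V\<in>\<V>. openin X V \<and> V \<subseteq> Q \<and> (\<exists>U\<in>\<U>. V \<subseteq> U)) \<and> Q \<subseteq> \<Union>\<V> \<and>
     (\<forall>y\<in>Q. \<exists>W. openin X W \<and> y \<in> W \<and> W \<subseteq> Q \<and> finite {V\<in>\<V>. V \<inter> W \<noteq> {}})"
    if Q: "Q \<in> PP" for Q
  proof -
    obtain z where z: "z \<in> topspace X" "Q = P z" using Q unfolding PP_def by blast
    show ?thesis unfolding z(2)
    proof (rule piece_refine[OF reg])
      show "openin X (P z)" "Lindelof_space (subtopology X (P z))" using P[OF z(1)] by auto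
      show "\<forall>U\<in>\<U>. openin X U" "topspace X \<subseteq> \<Union> \<U>" using cov by auto
    qed
  qed
  then have ex: "\<forall>Q\<in>PP. \<exists>\<V>. (\<forall>V\<in>\<V>. openin X V \<and> V \<subseteq> Q \<and> (\<exists>U\<in>\<U>. V \<subseteq> U)) \<and> Q \<subseteq> \<Union>\<V> \<and>
     (\<forall>y\<in>Q. \<exists>W. openin X W \<and> y \<in> W \<and> W \<subseteq> Q \<and> finite {V\<in>\<V>. V \<inter> W \<noteq> {}})" by (intro ballI)
  obtain VV where VV: "\<forall>Q\<in>PP. (\<forall>V\<in>VV Q. openin X V \<and> V \<subseteq> Q \<and> (\<exists>U\<in>\<U>. V \<subseteq> U)) \<and> Q \<subseteq> \<Union>(VV Q) \<and>
     (\<forall>y\<in>Q. \<exists>W. openin X W \<and> y \<in> W \<and> W \<subseteq> Q \<and> finite {V\<in>VV Q. V \<inter> W \<noteq> {}})"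
    using bchoice[OF ex] ..
  have VV1: "openin X V \<and> V \<subseteq> Q \<and> (\<exists>U\<in>\<U>. V \<subseteq> U)" if h: "Q \<in> PP" "V \<in> VV Q" for Q V
    using bspec[OF conjunct1[OF bspec[OF VV h(1)]] h(2)] .
  have VV2: "Q \<subseteq> \<Union>(VV Q)" if h: "Q \<in> PP" for Q
    using conjunct1[OF conjunct2[OF bspec[OF VV h(1)]]] .
  have VV3: "\<exists>W. openin X W \<and> y \<in> W \<and> W \<subseteq> Q \<and> finite {V\<in>VV Q. V \<inter> W \<noteq> {}}"
    if h: "Q \<in> PP" "y \<in> Q" for Q y
    using bspec[OF conjunct2[OF conjunct2[OF bspec[OF VV h(1)]]] h(2)] .
  define \<V> where "\<V> = \<Union>(VV ` PP)"
  show "\<exists>\<V>. (\<forall>V\<in>\<V>. openin X V) \<and> topspace X \<subseteq> \<Union>\<V> \<and>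
              (\<forall>V\<in>\<V>. \<exists>U\<in>\<U>. V \<subseteq> U) \<and> locally_finite_in X \<V>"
  proof (rule exI[of _ \<V>], intro conjI)
    show "\<forall>V\<in>\<V>. openin X V" unfolding \<V>_def using VV1 by auto
    show "\<forall>V\<in>\<V>. \<exists>U\<in>\<U>. V \<subseteq> U" unfolding \<V>_def using VV1 by auto
    show "topspace X \<subseteq> \<Union>\<V>"
    proof
      fix y assume y: "y \<in> topspace X"
      then have PY: "P y \<in> PP" unfolding PP_def by auto
      then have "y \<in> \<Union>(VV (P y))" using P[OF y] VV2[OF PY] by auto
      then show "y \<in> \<Union>\<V>" unfolding \<V>_def using PY by auto
    qed
    show "locally_finite_in X \<V>"
      unfolding locally_finite_in_def
    proof (intro conjI ballI)
      show "\<Union>\<V> \<subseteq> topspace X" unfolding \<V>_def using VV1 openin_subset by fastforce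
    next
      fix y assume y: "y \<in> topspace X"
      then have yP: "y \<in> P y" using P by blast
      have PY: "P y \<in> PP" using y unfolding PP_def by auto
      obtain W where W: "openin X W" "y \<in> W" "W \<subseteq> P y" "finite {V\<in>VV (P y). V \<inter> W \<noteq> {}}"
        using VV3[OF PY yP] by blast
      have "{V\<in>\<V>. V \<inter> W \<noteq> {}} \<subseteq> {V\<in>VV (P y). V \<inter> W \<noteq> {}}"
        unfolding \<V>_def
      proof clarify
        fix V Q assume V: "Q \<in> PP" "V \<in> VV Q" "V \<inter> W \<noteq> {}"
        then obtain z where z: "z \<in> topspace X" "Q = P z" unfolding PP_def by blast
        have "V \<subseteq> Q" using VV1[OF V(1,2)] by blast
        then have "P z \<inter> P y \<noteq> {}" using V W z by blast
        then have "P z = P y" using disj[OF z(1) y] by blast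
        then show "V \<in> VV (P y)" using V z by simp
      qed
      then show "\<exists>V. openin X V \<and> y \<in> V \<and> finite {U \<in> \<V>. U \<inter> V \<noteq> {}}"
        using W finite_subset by blast
    qed
  qed
qed



lemma cont_local:
  assumes "\<And>p. p \<in> topspace X \<Longrightarrow> \<exists>W. openin X W \<and> p \<in> W \<and> continuous_map (subtopology X W) Y f"
    and "f ` topspace X \<subseteq> topspace Y"
  shows "continuous_map X Y f"
  unfolding continuous_map_def
proof (intro conjI allI impI)
  show "f \<in> topspace X \<rightarrow> topspace Y" using assms(2) by auto
  fix U assume U: "openin Y U"
  show "openin X {x \<in> topspace X. f x \<in> U}"
  proof (subst openin_subopen, intro ballI)
    fix p assume p: "p \<in> {x \<in> topspace X. f x \<in> U}"
    then obtain W where W: "openin X W" "p \<in> W" "continuous_map (subtopology X W) Y f"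
      using assms(1) by blast
    have "openin (subtopology X W) {x \<in> topspace (subtopology X W). f x \<in> U}"
      using openin_continuous_map_preimage[OF W(3) U] .
    then have "openin X {x \<in> topspace (subtopology X W). f x \<in> U}"
      using openin_open_subtopology[OF W(1)] by blast
    moreover have "{x \<in> topspace (subtopology X W). f x \<in> U} \<subseteq> {x \<in> topspace X. f x \<in> U}"
      by auto
    moreover have "p \<in> {x \<in> topspace (subtopology X W). f x \<in> U}"
      using p W(1,2) openin_subset by auto
    ultimately show "\<exists>T. openin X T \<and> p \<in> T \<and> T \<subseteq> {x \<in> topspace X. f x \<in> U}" by blast
  qed
qed

locale gpd =
  fixes TG :: "'g topology" and TM :: "'m topology"
    and t s :: "'g \<Rightarrow> 'm" and u :: "'m \<Rightarrow> 'g" and i :: "'g \<Rightarrow> 'g" and m :: "'g \<Rightarrow> 'g \<Rightarrow> 'g"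
    and x :: 'm
  assumes ct: "continuous_map TG TM t" and cs: "continuous_map TG TM s"
    and cu: "continuous_map TM TG u" and ci: "continuous_map TG TG i"
    and cm: "continuous_map (subtopology (prod_topology TG TG) {(g, h). g \<in> topspace TG \<and> h \<in> topspace TG \<and> s g = t h}) TG (case_prod m)"
    and lcG: "locally_compact_space TG"
    and HM: "Hausdorff_space TM" and LM: "Lindelof_space TM"
    and ax1: "\<forall>g\<in>topspace TG. t g \<in> topspace TM \<and> s g \<in> topspace TM"
    and ax2: "\<forall>y\<in>topspace TM. u y \<in> topspace TG \<and> t (u y) = y \<and> s (u y) = y"
    and ax3: "\<forall>g\<in>topspace TG. i g \<in> topspace TG \<and> s (i g) = t g \<and> t (i g) = s g"
    and ax4: "\<forall>(g, h)\<in>{(g, h). g \<in> topspace TG \<and> h \<in> topspace TG \<and> s g = t h}. m g h \<in> topspace TG \<and> t (m g h) = t g \<and> s (m g h) = s h"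
    and ax5: "\<forall>g\<in>topspace TG. \<forall>h\<in>topspace TG. \<forall>k\<in>topspace TG. s g = t h \<and> s h = t k \<longrightarrow> m (m g h) k = m g (m h k)"
    and ax6: "\<forall>g\<in>topspace TG. m (u (t g)) g = g \<and> m g (u (s g)) = g"
    and ax7: "\<forall>g\<in>topspace TG. m g (i g) = u (t g) \<and> m (i g) g = u (s g)"
    and xM: "x \<in> topspace TM"
    and HX: "Hausdorff_space (subtopology TG {g \<in> topspace TG. t g = x})"
begin

abbreviation "G \<equiv> topspace TG"
abbreviation "M \<equiv> topspace TM"
abbreviation "Gx \<equiv> {g \<in> topspace TG. t g = x}"

lemma mG: "g \<in> G \<Longrightarrow> h \<in> G \<Longrightarrow> s g = t h \<Longrightarrow> m g h \<in> G \<and> t (m g h) = t g \<and> s (m g h) = s h"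
  using ax4 by blast

lemma assoc: "g \<in> G \<Longrightarrow> h \<in> G \<Longrightarrow> k \<in> G \<Longrightarrow> s g = t h \<Longrightarrow> s h = t k \<Longrightarrow> m (m g h) k = m g (m h k)"
  using ax5 by blast

lemma inv_unique:
  assumes c: "c \<in> G" and d: "d \<in> G" and cd: "s c = t d" and e: "m c d = u (t c)"
  shows "d = i c"
proof -
  have ic: "i c \<in> G" "s (i c) = t c" "t (i c) = s c" using ax3 c by auto
  have "i c = m (i c) (u (s (i c)))" using ax6 ic by auto
  also have "\<dots> = m (i c) (m c d)" using ic e by simp
  also have "\<dots> = m (m (i c) c) d" using assoc[OF ic(1) c d] ic cd by simp
  also have "\<dots> = m (u (s c)) d" using ax7 c by simp
  also have "\<dots> = d" using ax6 d cd by simp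
  finally show ?thesis by simp
qed

lemma inv_inv: "g \<in> G \<Longrightarrow> i (i g) = g"
  using inv_unique[of "i g" g] ax3 ax7 by auto

lemma inv_div:
  assumes g: "g \<in> Gx" and h: "h \<in> Gx"
  shows "i (m (i g) h) = m (i h) g"
proof -
  have gG: "g \<in> G" "t g = x" and hG: "h \<in> G" "t h = x" using g h by auto
  have ig: "i g \<in> G" "s (i g) = t g" "t (i g) = s g" using ax3 gG by auto
  have ih: "i h \<in> G" "s (i h) = t h" "t (i h) = s h" using ax3 hG by auto
  have c: "m (i g) h \<in> G" "t (m (i g) h) = s g" "s (m (i g) h) = s h" using mG[OF ig(1) hG(1)] ig gG hG by auto
  have d: "m (i h) g \<in> G" "t (m (i h) g) = s h" "s (m (i h) g) = s g" using mG[OF ih(1) gG(1)] ih gG hG by auto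
  have "m h (m (i h) g) = m (m h (i h)) g" using assoc[OF hG(1) ih(1) gG(1)] ih gG hG by simp
  also have "\<dots> = m (u (t g)) g" using ax7 hG gG by simp
  also have "\<dots> = g" using ax6 gG by metis
  finally have hg: "m h (m (i h) g) = g" .
  have "m (m (i g) h) (m (i h) g) = m (i g) (m h (m (i h) g))"
    using assoc[OF ig(1) hG(1) d(1)] ig gG hG d by simp
  also have "\<dots> = u (s g)" using hg ax7 gG by simp
  finally have "m (m (i g) h) (m (i h) g) = u (t (m (i g) h))" using c by simp
  from inv_unique[OF c(1) d(1) _ this] c d show ?thesis by simp
qed

lemma Gx_sub: "Gx \<subseteq> G" by auto

lemma topX: "topspace (subtopology TG Gx) = Gx" by auto

lemma cont_left:
  assumes h: "h \<in> Gx"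
  shows "continuous_map (subtopology TG Gx) TG (\<lambda>h'. m (i h) h')"
proof -
  have ih: "i h \<in> G" "s (i h) = x" using ax3 h by auto
  have "continuous_map (subtopology TG Gx) (prod_topology TG TG) (\<lambda>h'. (i h, h'))"
    by (intro continuous_map_pairedI) (auto simp: ih continuous_map_from_subtopology)
  then have "continuous_map (subtopology TG Gx) (subtopology (prod_topology TG TG) {(g, h). g \<in> G \<and> h \<in> G \<and> s g = t h}) (\<lambda>h'. (i h, h'))"
    using ih by (auto simp: continuous_map_in_subtopology)
  from continuous_map_compose[OF this cm] show ?thesis by (simp add: o_def)
qed

lemma cont_right:
  assumes h: "h \<in> Gx"
  shows "continuous_map (subtopology TG Gx) TG (\<lambda>h'. m (i h') h)"
proof -
  have "continuous_map (subtopology TG Gx) (prod_topology TG TG) (\<lambda>h'. (i h', h))"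
    using h by (intro continuous_map_pairedI) (auto simp: continuous_map_from_subtopology ci)
  then have "continuous_map (subtopology TG Gx) (subtopology (prod_topology TG TG) {(g, h). g \<in> G \<and> h \<in> G \<and> s g = t h}) (\<lambda>h'. (i h', h))"
    using h ax3 by (auto simp: continuous_map_in_subtopology)
  from continuous_map_compose[OF this cm] show ?thesis by (simp add: o_def)
qed

lemma KK_exists:
  "\<exists>KK. countable KK \<and> (\<forall>K\<in>KK. compactin TG K) \<and> (\<forall>k\<in>\<Union>KK. i k \<in> \<Union>KK) \<and>
        (\<forall>y\<in>M. \<exists>N. openin TG N \<and> u y \<in> N \<and> N \<subseteq> \<Union>KK)"
proof -
  have "\<exists>N K. openin TG N \<and> compactin TG K \<and> u y \<in> N \<and> N \<subseteq> K" if y: "y \<in> M" for y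
  proof -
    have "u y \<in> G" using ax2 y by blast
    then show ?thesis using lcG unfolding locally_compact_space_def by blast
  qed
  then have "\<forall>y\<in>M. \<exists>NK. openin TG (fst NK) \<and> compactin TG (snd NK) \<and> u y \<in> fst NK \<and> fst NK \<subseteq> snd NK"
    by simp
  from bchoice[OF this] obtain NK where NK: "\<forall>y\<in>M. openin TG (fst (NK y)) \<and> compactin TG (snd (NK y)) \<and> u y \<in> fst (NK y) \<and> fst (NK y) \<subseteq> snd (NK y)"
    ..
  define N where "N y = fst (NK y)" for y
  define K where "K y = snd (NK y)" for y
  have OK1: "openin TG (N y)" and OK2: "compactin TG (K y)" and OK3: "u y \<in> N y" and OK4: "N y \<subseteq> K y"
    if "y \<in> M" for y using NK that unfolding N_def K_def by auto
  define UU where "UU = (\<lambda>y. {z \<in> M. u z \<in> N y}) ` M"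
  have "\<forall>U\<in>UU. openin TM U" unfolding UU_def
  proof
    fix U assume "U \<in> (\<lambda>y. {z \<in> M. u z \<in> N y}) ` M"
    then obtain y where "y \<in> M" "U = {z \<in> M. u z \<in> N y}" by blast
    then show "openin TM U" using openin_continuous_map_preimage[OF cu OK1] by simp
  qed
  moreover have "M \<subseteq> \<Union>UU" unfolding UU_def
  proof
    fix z assume "z \<in> M" then have "z \<in> {z' \<in> M. u z' \<in> N z}" using OK3 by simp
    then show "z \<in> \<Union>((\<lambda>y. {z \<in> M. u z \<in> N y}) ` M)" using \<open>z \<in> M\<close> by blast
  qed
  ultimately have "\<exists>VV. countable VV \<and> VV \<subseteq> UU \<and> M \<subseteq> \<Union>VV"
    using LM unfolding Lindelof_space_alt by (elim allE[of _ UU]) simp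
  then obtain VV where VV: "countable VV" "VV \<subseteq> UU" "M \<subseteq> \<Union>VV" by blast
  have "\<exists>Z. countable Z \<and> Z \<subseteq> M \<and> VV = (\<lambda>y. {z \<in> M. u z \<in> N y}) ` Z"
    using VV(1,2) unfolding UU_def countable_subset_image[symmetric] by (rule conjI)
  then obtain Z where Z: "Z \<subseteq> M" "countable Z" "VV = (\<lambda>y. {z \<in> M. u z \<in> N y}) ` Z"
    by blast
  define KK where "KK = K ` Z \<union> (\<lambda>z. i ` K z) ` Z"
  have KG: "K z \<subseteq> G" if zZ: "z \<in> Z" for z
  proof -
    have "compactin TG (K z)" using OK2 Z zZ by blast
    then show ?thesis by (rule compactin_subset_topspace)
  qed
  show ?thesis
  proof (rule exI[of _ KK], intro conjI ballI)
    show "countable KK" unfolding KK_def using Z by auto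
  next
    fix C assume "C \<in> KK"
    then obtain z where z: "z \<in> Z" "C = K z \<or> C = i ` K z" unfolding KK_def by blast
    have "compactin TG (K z)" using OK2 Z z by blast
    then show "compactin TG C" using z image_compactin[OF _ ci] by blast
  next
    fix k assume "k \<in> \<Union>KK"
    then obtain z where z: "z \<in> Z" "k \<in> K z \<or> k \<in> i ` K z" unfolding KK_def by blast
    from z(2) show "i k \<in> \<Union>KK"
    proof (elim disjE)
      assume "k \<in> i ` K z"
      then obtain k' where "k' \<in> K z" "k = i k'" by blast
      then have "i k = k'" using inv_inv KG z by blast
      then show ?thesis unfolding KK_def using z \<open>k' \<in> K z\<close> by blast
    next
      assume "k \<in> K z" then show ?thesis unfolding KK_def using z(1) by blast
    qed
  next
    fix y assume y: "y \<in> M"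
    then obtain z where z: "z \<in> Z" "u y \<in> N z" using VV Z by blast
    have "N z \<subseteq> \<Union>KK" using OK4[of z] z Z unfolding KK_def by blast
    then show "\<exists>N. openin TG N \<and> u y \<in> N \<and> N \<subseteq> \<Union>KK"
      using OK1[of z] z Z by blast
  qed
qed

end



locale gpdK = gpd +
  fixes KK
  assumes KKc: "countable KK" and KKcomp: "\<forall>K\<in>KK. compactin TG K"
    and KKsym: "\<forall>k\<in>\<Union>KK. i k \<in> \<Union>KK"
    and KKnb: "\<forall>y\<in>M. \<exists>N. openin TG N \<and> u y \<in> N \<and> N \<subseteq> \<Union>KK"
begin

definition "R = {(g, h). g \<in> Gx \<and> h \<in> Gx \<and> m (i g) h \<in> \<Union>KK}"
definition "P g = (R\<^sup>*) `` {g}"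

lemma R_sym: "sym R"
proof (rule symI)
  fix g h assume "(g, h) \<in> R"
  then have g: "g \<in> Gx" and h: "h \<in> Gx" and k: "m (i g) h \<in> \<Union>KK" unfolding R_def by auto
  have "m (i h) g = i (m (i g) h)" using inv_div[OF g h] by simp
  then have "m (i h) g \<in> \<Union>KK" using KKsym k by metis
  then show "(h, g) \<in> R" using g h unfolding R_def by auto
qed

lemma Rs_sym: "(a, b) \<in> R\<^sup>* \<Longrightarrow> (b, a) \<in> R\<^sup>*"
  using sym_rtrancl[OF R_sym] by (auto dest: symD)

lemma Rs_Gx: "(a, b) \<in> R\<^sup>* \<Longrightarrow> a \<in> Gx \<Longrightarrow> b \<in> Gx"
  by (induction rule: rtrancl_induct) (auto simp: R_def)

lemma P_self: "g \<in> P g" unfolding P_def by auto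

lemma P_sub: "g \<in> Gx \<Longrightarrow> P g \<subseteq> Gx" unfolding P_def using Rs_Gx by auto

lemma P_disj: "P y = P z \<or> P y \<inter> P z = {}"
proof (cases "P y \<inter> P z = {}")
  case False
  then obtain w where "(y, w) \<in> R\<^sup>*" "(z, w) \<in> R\<^sup>*" unfolding P_def by auto
  then have yz: "(y, z) \<in> R\<^sup>*" and zy: "(z, y) \<in> R\<^sup>*" using Rs_sym rtrancl_trans by metis+
  have "P y = P z" unfolding P_def
    using rtrancl_trans[OF yz] rtrancl_trans[OF zy] by auto
  then show ?thesis by blast
qed blast

lemma P_open:
  assumes g: "g \<in> Gx"
  shows "openin (subtopology TG Gx) (P g)"
proof (subst openin_subopen, intro ballI)
  fix h assume hP: "h \<in> P g"
  then have h: "h \<in> Gx" using P_sub[OF g] by blast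
  then have "s h \<in> M" using ax1 by blast
  then obtain N where N: "openin TG N" "u (s h) \<in> N" "N \<subseteq> \<Union>KK" using KKnb by blast
  define W where "W = {h' \<in> topspace (subtopology TG Gx). m (i h) h' \<in> N}"
  have "openin (subtopology TG Gx) W"
    unfolding W_def by (rule openin_continuous_map_preimage[OF cont_left[OF h] N(1)])
  moreover have "h \<in> W" unfolding W_def using h ax7 N by auto
  moreover have "W \<subseteq> P g"
  proof
    fix h' assume "h' \<in> W"
    then have "(h, h') \<in> R" unfolding W_def R_def using h N by auto
    moreover have "(g, h) \<in> R\<^sup>*" using hP unfolding P_def by auto
    ultimately show "h' \<in> P g" unfolding P_def by auto
  qed
  ultimately show "\<exists>T. openin (subtopology TG Gx) T \<and> h \<in> T \<and> T \<subseteq> P g" by blast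
qed

definition "mimg C K = (\<lambda>(a, b). m a b) ` {(a, b) \<in> C \<times> K. s a = t b}"

lemma mimg_compact:
  assumes C: "compactin TG C" "C \<subseteq> Gx" and K: "K \<in> KK"
  shows "compactin TG (mimg C K) \<and> mimg C K \<subseteq> Gx"
proof
  have Kc: "compactin TG K" using KKcomp K by blast
  then have KG: "K \<subseteq> G" by (rule compactin_subset_topspace)
  define D where "D = {p \<in> topspace (prod_topology TG TG). (\<lambda>(a, b). (s a, t b)) p \<in> (\<lambda>y. (y, y)) ` M}"
  have "continuous_map (prod_topology TG TG) (prod_topology TM TM) (\<lambda>(a, b). (s a, t b))"
  proof -
    have "continuous_map (prod_topology TG TG) (prod_topology TM TM) (\<lambda>p. (s (fst p), t (snd p)))"
      by (intro continuous_map_pairedI continuous_map_compose[OF continuous_map_fst cs, unfolded o_def]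
            continuous_map_compose[OF continuous_map_snd ct, unfolded o_def])
    then show ?thesis by (simp add: case_prod_beta')
  qed
  then have "closedin (prod_topology TG TG) D" unfolding D_def
    by (rule closedin_continuous_map_preimage) (simp add: HM flip: Hausdorff_space_closedin_diagonal)
  moreover have "compactin (prod_topology TG TG) (C \<times> K)" using C Kc by (simp add: compactin_Times)
  ultimately have "compactin (prod_topology TG TG) (D \<inter> (C \<times> K))" by (rule closed_Int_compactin)
  moreover have DCK: "D \<inter> (C \<times> K) = {(a, b) \<in> C \<times> K. s a = t b}"
    unfolding D_def using C KG ax1 by auto
  ultimately have "compactin (prod_topology TG TG) {(a, b) \<in> C \<times> K. s a = t b}" by simp
  moreover have "{(a, b) \<in> C \<times> K. s a = t b} \<subseteq> {(g, h). g \<in> G \<and> h \<in> G \<and> s g = t h}"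
    using C KG by auto
  ultimately have "compactin (subtopology (prod_topology TG TG) {(g, h). g \<in> G \<and> h \<in> G \<and> s g = t h}) {(a, b) \<in> C \<times> K. s a = t b}"
    by (simp add: compactin_subtopology)
  from image_compactin[OF this cm] show "compactin TG (mimg C K)" unfolding mimg_def .
  show "mimg C K \<subseteq> Gx"
  proof
    fix h assume "h \<in> mimg C K"
    then obtain a b where ab: "a \<in> C" "b \<in> K" "s a = t b" "h = m a b" unfolding mimg_def by auto
    then have "a \<in> G" "b \<in> G" "t a = x" using C KG by auto
    then show "h \<in> Gx" using mG[of a b] ab by auto
  qed
qed

lemma R_Image:
  assumes C: "C \<subseteq> Gx"
  shows "R `` C = (\<Union>K\<in>KK. mimg C K)"
proof
  show "R `` C \<subseteq> (\<Union>K\<in>KK. mimg C K)"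
  proof
    fix h assume "h \<in> R `` C"
    then obtain a where a: "a \<in> C" "(a, h) \<in> R" by blast
    then have aG: "a \<in> Gx" and h: "h \<in> Gx" and k: "m (i a) h \<in> \<Union>KK" using C unfolding R_def by auto
    then obtain K where K: "K \<in> KK" "m (i a) h \<in> K" by blast
    have ia: "i a \<in> G" "s (i a) = t a" "t (i a) = s a" using ax3 aG by auto
    have tk: "t (m (i a) h) = s a" using mG[OF ia(1), of h] ia aG h by auto
    have "m a (m (i a) h) = m (m a (i a)) h" using assoc[of a "i a" h] ia aG h by auto
    also have "\<dots> = m (u (t h)) h" using ax7 aG h by auto
    also have "\<dots> = h" using ax6 h by auto
    finally have "h = m a (m (i a) h)" by simp
    then have "h \<in> mimg C K" unfolding mimg_def using a K tk by force
    then show "h \<in> (\<Union>K\<in>KK. mimg C K)" using K by blast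
  qed
next
  show "(\<Union>K\<in>KK. mimg C K) \<subseteq> R `` C"
  proof
    fix h assume "h \<in> (\<Union>K\<in>KK. mimg C K)"
    then obtain K where K0: "K \<in> KK" "h \<in> mimg C K" by blast
    then obtain a k where K1: "a \<in> C" "k \<in> K" "s a = t k" "h = m a k"
      unfolding mimg_def by auto
    note K = K0(1) K1
    have KG: "K \<subseteq> G" using KKcomp K compactin_subset_topspace by blast
    have aG: "a \<in> Gx" using C K by blast
    have kG: "k \<in> G" using KG K by blast
    have hG: "h \<in> Gx" using mG[of a k] aG kG K by auto
    have ia: "i a \<in> G" "s (i a) = t a" "t (i a) = s a" using ax3 aG by auto
    have "m (i a) h = m (m (i a) a) k" using assoc[of "i a" a k] ia aG kG K by auto
    also have "\<dots> = m (u (t k)) k" using ax7 aG K by auto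
    also have "\<dots> = k" using ax6 kG by auto
    finally have "(a, h) \<in> R" unfolding R_def using aG hG K by auto
    then show "h \<in> R `` C" using K by blast
  qed
qed

lemma relpow_sc:
  assumes g: "g \<in> Gx"
  shows "\<exists>CC. countable CC \<and> (\<forall>C\<in>CC. compactin TG C \<and> C \<subseteq> Gx) \<and> (R^^n) `` {g} = \<Union>CC"
proof (induction n)
  case 0
  show ?case using g by (rule_tac x="{{g}}" in exI) auto
next
  case (Suc n)
  then obtain CC where CC: "countable CC" "\<forall>C\<in>CC. compactin TG C \<and> C \<subseteq> Gx" "(R^^n) `` {g} = \<Union>CC"
    by blast
  have "(R^^Suc n) `` {g} = R `` ((R^^n) `` {g})" by auto
  also have "\<dots> = (\<Union>C\<in>CC. R `` C)" using CC(3) by auto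
  also have "\<dots> = (\<Union>C\<in>CC. \<Union>K\<in>KK. mimg C K)" using R_Image CC(2) by auto
  also have "\<dots> = \<Union>((\<lambda>(C, K). mimg C K) ` (CC \<times> KK))" by auto
  finally have eq: "(R^^Suc n) `` {g} = \<Union>((\<lambda>(C, K). mimg C K) ` (CC \<times> KK))" .
  show ?case
  proof (rule exI[of _ "(\<lambda>(C, K). mimg C K) ` (CC \<times> KK)"], intro conjI)
    show "countable ((\<lambda>(C, K). mimg C K) ` (CC \<times> KK))" using CC(1) KKc by auto
  next
    show "\<forall>D\<in>(\<lambda>(C, K). mimg C K) ` (CC \<times> KK). compactin TG D \<and> D \<subseteq> Gx"
    proof
      fix D assume "D \<in> (\<lambda>(C, K). mimg C K) ` (CC \<times> KK)"
      then obtain C K where "C \<in> CC" "K \<in> KK" "D = mimg C K" by auto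
      then show "compactin TG D \<and> D \<subseteq> Gx" using mimg_compact CC(2) by blast
    qed
  qed (rule eq)
qed

lemma P_lind:
  assumes g: "g \<in> Gx"
  shows "Lindelof_space (subtopology (subtopology TG Gx) (P g))"
proof -
  from relpow_sc[OF g] obtain CC where CC: "\<And>n. countable (CC n) \<and> (\<forall>C\<in>CC n. compactin TG C \<and> C \<subseteq> Gx) \<and> (R^^n) `` {g} = \<Union>(CC n)"
    by metis
  have "P g = \<Union>(\<Union>n. CC n)" unfolding P_def
  proof
    show "R\<^sup>* `` {g} \<subseteq> \<Union>(\<Union>n. CC n)"
    proof
      fix h assume "h \<in> R\<^sup>* `` {g}"
      then obtain n where "(g, h) \<in> R^^n" using rtrancl_power by blast
      then have "h \<in> \<Union>(CC n)" using CC[of n] by blast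
      then show "h \<in> \<Union>(\<Union>n. CC n)" by blast
    qed
    show "\<Union>(\<Union>n. CC n) \<subseteq> R\<^sup>* `` {g}"
    proof
      fix h assume "h \<in> \<Union>(\<Union>n. CC n)"
      then obtain n where "h \<in> \<Union>(CC n)" by blast
      then have "(g, h) \<in> R^^n" using CC[of n] by blast
      then show "h \<in> R\<^sup>* `` {g}" using rtrancl_power by blast
    qed
  qed
  moreover have "Lindelof_space (subtopology (subtopology TG Gx) (\<Union>(\<Union>n. CC n)))"
  proof (rule Lindelof_space_Union)
    show "countable (\<Union>n. CC n)" using CC by auto
  next
    fix C assume "C \<in> (\<Union>n. CC n)"
    then have "compactin TG C \<and> C \<subseteq> Gx" using CC by blast
    then have "compactin (subtopology TG Gx) C" by (simp add: compactin_subtopology)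
    then show "Lindelof_space (subtopology (subtopology TG Gx) C)"
      by (intro compact_imp_Lindelof_space compact_space_subtopology)
  qed
  ultimately show ?thesis by simp
qed

lemma para: "paracompact_space (subtopology TG Gx)"
proof (rule para_pieces)
  have "closedin TM {x}" using closedin_t1_singleton[OF Hausdorff_imp_t1_space[OF HM] xM] .
  then have "closedin TG {g \<in> G. t g \<in> {x}}" by (rule closedin_continuous_map_preimage[OF ct])
  then have "closedin TG Gx" by simp
  then have "locally_compact_space (subtopology TG Gx)" by (rule locally_compact_space_closed_subset[OF lcG])
  then show "regular_space (subtopology TG Gx)" using locally_compact_Hausdorff_imp_regular_space HX by blast
next
  fix y assume "y \<in> topspace (subtopology TG Gx)"
  then have y: "y \<in> Gx" by simp
  show "y \<in> P y \<and> openin (subtopology TG Gx) (P y) \<and> Lindelof_space (subtopology (subtopology TG Gx) (P y))"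
    using P_self P_open[OF y] P_lind[OF y] by blast
next
  fix y z show "P y = P z \<or> P y \<inter> P z = {}" by (rule P_disj)
qed

end

context gpd
begin

lemma gpd_para: "paracompact_space (subtopology TG Gx)"
proof -
  obtain KK where KK: "countable KK" "\<forall>K\<in>KK. compactin TG K" "\<forall>k\<in>\<Union>KK. i k \<in> \<Union>KK"
        "\<forall>y\<in>M. \<exists>N. openin TG N \<and> u y \<in> N \<and> N \<subseteq> \<Union>KK"
    using KK_exists by blast
  have "gpdK TG TM t s u i m x KK"
    by (intro gpdK.intro gpd_axioms gpdK_axioms.intro KK)
  then show ?thesis by (rule gpdK.para)
qed

end



lemma sm_cont: "smooth_map X A Y B f \<Longrightarrow> continuous_map X Y f"
  unfolding smooth_map_def smooth_map_on_def by simp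

lemma subset_cont:
  assumes sm: "smooth_on_subset P A S Y B f" and fS: "f ` S \<subseteq> topspace Y"
  shows "continuous_map (subtopology P S) Y f"
proof (rule cont_local)
  show "f ` topspace (subtopology P S) \<subseteq> topspace Y" using fS by auto
next
  fix p assume "p \<in> topspace (subtopology P S)"
  then have p: "p \<in> S" by simp
  then obtain W F where W: "openin P W" "p \<in> W" "smooth_map_on P A W Y B F" "\<forall>q\<in>W \<inter> S. F q = f q"
    using sm unfolding smooth_on_subset_def by blast
  have cF: "continuous_map (subtopology P W) Y F" using W(3) unfolding smooth_map_on_def by simp
  then have "continuous_map (subtopology (subtopology P W) S) Y F" by (rule continuous_map_from_subtopology)
  then have "continuous_map (subtopology (subtopology P S) (S \<inter> W)) Y F"
    by (simp add: subtopology_subtopology Int_commute Int_left_commute)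
  then have "continuous_map (subtopology (subtopology P S) (S \<inter> W)) Y f"
    by (rule continuous_map_eq) (use W(4) in auto)
  moreover have "openin (subtopology P S) (S \<inter> W)" using W(1) by (rule openin_subtopology_Int2)
  ultimately show "\<exists>W. openin (subtopology P S) W \<and> p \<in> W \<and> continuous_map (subtopology (subtopology P S) W) Y f"
    using p W(2) by blast
qed

lemma atlas_lc:
  fixes A :: "('x set \<times> ('x \<Rightarrow> 'e::euclidean_space)) set"
  assumes at: "smooth_atlas X A"
  shows "locally_compact_space X"
  unfolding locally_compact_space_def
proof
  fix g assume g: "g \<in> topspace X"
  have cov: "\<Union>(fst ` A) = topspace X" and chs: "\<forall>c\<in>A. chart_in X c"
    using at unfolding smooth_atlas_def by auto
  obtain c where c: "c \<in> A" "g \<in> fst c" using g cov by blast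
  obtain U \<phi> where cU: "c = (U, \<phi>)" by (cases c)
  have gU: "g \<in> U" using c cU by simp
  have "chart_in X (U, \<phi>)" using chs c cU by simp
  then have ch: "openin X U" "open (\<phi> ` U)" "homeomorphic_map (subtopology X U) (top_of_set (\<phi> ` U)) \<phi>"
    unfolding chart_in_def by simp_all
  have "locally_compact_space (top_of_set (\<phi> ` U))"
  proof (rule locally_compact_space_open_subset)
    show "Hausdorff_space (euclidean :: 'e topology) \<or> regular_space (euclidean :: 'e topology)" by simp
    show "locally_compact_space (euclidean :: 'e topology)" by (rule locally_compact_space_euclidean)
    show "openin euclidean (\<phi> ` U)" using ch(2) by simp
  qed
  moreover have "subtopology X U homeomorphic_space top_of_set (\<phi> ` U)"
    unfolding homeomorphic_space using ch(3) by blast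
  ultimately have "locally_compact_space (subtopology X U)"
    by (simp add: homeomorphic_locally_compact_space)
  moreover have "g \<in> topspace (subtopology X U)" using g gU by simp
  ultimately obtain V K where VK: "openin (subtopology X U) V" "compactin (subtopology X U) K" "g \<in> V" "V \<subseteq> K"
    unfolding locally_compact_space_def by blast
  have "openin X V" using VK(1) openin_open_subtopology[OF ch(1)] by simp
  moreover have "compactin X K" using VK(2) by (simp add: compactin_subtopology)
  ultimately show "\<exists>U K. openin X U \<and> compactin X K \<and> g \<in> U \<and> U \<subseteq> K" using VK(3,4) by blast
qed

theorem lemma13p1:
  fixes TG :: "'g topology" and AG :: "('g set \<times> ('g \<Rightarrow> 'e::euclidean_space)) set"
    and TM :: "'m topology" and AM :: "('m set \<times> ('m \<Rightarrow> 'f::euclidean_space)) set"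
    and t s :: "'g \<Rightarrow> 'm" and u :: "'m \<Rightarrow> 'g" and i :: "'g \<Rightarrow> 'g" and m :: "'g \<Rightarrow> 'g \<Rightarrow> 'g"
    and x :: 'm
  assumes "lie_groupoid TG AG TM AM t s u i m"
    and "x \<in> topspace TM"
  shows "paracompact_space (subtopology TG {g \<in> topspace TG. t g = x})"
proof -
  note L = assms(1)[unfolded lie_groupoid_def Let_def]
  have atG: "smooth_atlas TG AG" using L by (elim conjE) assumption
  have sub: "submersion TG AG TM AM t" using L by (elim conjE) assumption
  have smS: "smooth_map TG AG TM AM s" using L by (elim conjE) assumption
  have smU: "smooth_map TM AM TG AG u" using L by (elim conjE) assumption
  have smI: "smooth_map TG AG TG AG i" using L by (elim conjE) assumption
  have smM: "smooth_on_subset (prod_topology TG TG) (prod_atlas AG AG)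
      {(g, h). g \<in> topspace TG \<and> h \<in> topspace TG \<and> s g = t h} TG AG (case_prod m)" using L by (elim conjE) assumption
  have HM: "Hausdorff_space TM" using L by (elim conjE) assumption
  have SM: "second_countable TM" using L by (elim conjE) assumption
  have ax1: "\<forall>g\<in>topspace TG. t g \<in> topspace TM \<and> s g \<in> topspace TM" using L by (elim conjE) assumption
  have ax2: "\<forall>y\<in>topspace TM. u y \<in> topspace TG \<and> t (u y) = y \<and> s (u y) = y" using L by (elim conjE) assumption
  have ax3: "\<forall>g\<in>topspace TG. i g \<in> topspace TG \<and> s (i g) = t g \<and> t (i g) = s g" using L by (elim conjE) assumption
  have ax4: "\<forall>(g, h)\<in>{(g, h). g \<in> topspace TG \<and> h \<in> topspace TG \<and> s g = t h}. m g h \<in> topspace TG \<and> t (m g h) = t g \<and> s (m g h) = s h"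
    using L by (elim conjE) assumption
  have ax5: "\<forall>g\<in>topspace TG. \<forall>h\<in>topspace TG. \<forall>k\<in>topspace TG. s g = t h \<and> s h = t k \<longrightarrow> m (m g h) k = m g (m h k)"
    using L by (elim conjE) assumption
  have ax6: "\<forall>g\<in>topspace TG. m (u (t g)) g = g \<and> m g (u (s g)) = g" using L by (elim conjE) assumption
  have ax7: "\<forall>g\<in>topspace TG. m g (i g) = u (t g) \<and> m (i g) g = u (s g)" using L by (elim conjE) assumption
  have HX: "Hausdorff_space (subtopology TG {g \<in> topspace TG. t g = x})" using L assms(2) by (elim conjE) (rule bspec)
  have ct: "continuous_map TG TM t" using sub unfolding submersion_def by (blast intro: sm_cont)
  have cm: "continuous_map (subtopology (prod_topology TG TG) {(g, h). g \<in> topspace TG \<and> h \<in> topspace TG \<and> s g = t h}) TG (case_prod m)"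
    by (rule subset_cont[OF smM]) (use ax4 in auto)
  have "gpd TG TM t s u i m x"
  proof (unfold_locales)
    show "continuous_map TG TM t" by (rule ct)
    show "continuous_map TG TM s" using smS by (rule sm_cont)
    show "continuous_map TM TG u" using smU by (rule sm_cont)
    show "continuous_map TG TG i" using smI by (rule sm_cont)
    show "locally_compact_space TG" using atG by (rule atlas_lc)
    show "Lindelof_space TM" using SM by (rule second_countable_imp_Lindelof_space)
  qed (fact cm HM ax1 ax2 ax3 ax4 ax5 ax6 ax7 assms(2) HX)+
  then show ?thesis by (rule gpd.gpd_para)
qed


end
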